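(* For every $i,j\in[K]$, $$\boldsymbol\tau^\star_{\mathrm{lin}}(\mathcal{Z}:\mathcal{X}-x_i)\le 4\,\boldsymbol\tau^\star_{\mathrm{lin}}(\mathcal{Z}:\mathcal{X}-x_j).$$
   Context: $\mathcal{X}=\{x_1,\dots,x_K\}\subset\mathbb{R}^d$, $\mathcal{Z}\subset\mathbb{R}^d$ finite, $\theta^\star\in\mathbb{R}^d$, and $z^\star$ the unique maximizer of $z^\top\theta^\star$ over $z\in\mathcal{Z}$. $\Delta^{(K)}$ is the probability simplex on $[K]$. Generalized inverse norm: for a positive semidefinite matrix $\mathbf A$ and $x\in\mathbb{R}^d$, $\|x\|_{\mathbf A^{-1}}:=\lim_{\lambda\to0^+}\sqrt{x^\top(\mathbf A+\lambda\mathbf I_d)^{-1}x}$ (equal to $+\infty$ if $x$ is not in the column space of $\mathbf A$). For $j\in[K]$ and $\mathbf p\in\Delta^{(K)}$, $\mathbf\Sigma_{-j,\mathbf p}:=\sum_{i=1}^Kp_i(x_i-x_j)(x_i-x_j)^\top$, and $$\boldsymbol\tau^\star_{\mathrm{lin}}(\mathcal{Z}:\mathcal{X}-x_j):=\min_{\mathbf p\in\Delta^{(K)}}\max_{z\in\mathcal{Z}\setminus\{z^\star\}}\frac{\|z^\star-z\|^2_{\mathbf\Sigma_{-j,\mathbf p}^{-1}}}{((z^\star-z)^\top\theta^\star)^2}$$ (with values in $[0,+\infty]$). *)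

theory Defs
  imports "HOL-Analysis.Analysis"
begin

definition outer :: "real^'d \<Rightarrow> real^'d \<Rightarrow> real^'d^'d" where
  "outer u v = (\<chi> a b. u $ a * v $ b)"

text \<open>Generalized inverse norm: lim_{lambda -> 0+} sqrt (x^T (A + lambda I)^{-1} x),
  taken in the extended reals (it is +infinity when x is not in the column space of A).\<close>
definition gen_inv_norm :: "real^'d^'d \<Rightarrow> real^'d \<Rightarrow> ereal" where
  "gen_inv_norm A x =
     Lim (at_right (0::real))
       (\<lambda>l. ereal (sqrt (x \<bullet> (matrix_inv (A + l *\<^sub>R mat 1) *v x))))"

definition prob_simplex :: "nat \<Rightarrow> (nat \<Rightarrow> real) set" where
  "prob_simplex K = {p. (\<forall>i\<in>{1..K}. 0 \<le> p i) \<and> (\<Sum>i=1..K. p i) = 1}"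

definition Sigma_minus :: "nat \<Rightarrow> (nat \<Rightarrow> real^'d) \<Rightarrow> nat \<Rightarrow> (nat \<Rightarrow> real) \<Rightarrow> real^'d^'d" where
  "Sigma_minus K x j p = (\<Sum>i=1..K. p i *\<^sub>R outer (x i - x j) (x i - x j))"

text \<open>tau*_lin(Z : X - x_j), with values in [0, +infinity] (min over the prob_simplex rendered as INF).\<close>
definition tau_lin :: "nat \<Rightarrow> (nat \<Rightarrow> real^'d) \<Rightarrow> (real^'d) set \<Rightarrow> real^'d \<Rightarrow> real^'d \<Rightarrow> nat \<Rightarrow> ereal" where
  "tau_lin K x Z \<theta> zs j =
     (INF p\<in>prob_simplex K. SUP z\<in>Z - {zs}.
        (gen_inv_norm (Sigma_minus K x j p) (zs - z))\<^sup>2 / ereal (((zs - z) \<bullet> \<theta>)\<^sup>2))"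

end

theory Submission imports Defs begin

lemma outer_mult: "outer u u *v y = (u \<bullet> y) *\<^sub>R u"
  by (simp add: vec_eq_iff matrix_vector_mult_def outer_def inner_vec_def sum_distrib_left mult_ac)

lemma sum_mat_mult: "finite S \<Longrightarrow> (\<Sum>k\<in>S. (M k :: real^'d^'d)) *v y = (\<Sum>k\<in>S. M k *v y)"
  by (induction S rule: finite_induct) (auto simp: matrix_vector_mult_add_rdistrib)

lemma qf_sum:
  fixes u :: "nat \<Rightarrow> real^'d"
  assumes "finite S"
  shows "y \<bullet> ((\<Sum>k\<in>S. c k *\<^sub>R outer (u k) (u k)) *v y) = (\<Sum>k\<in>S. c k * (u k \<bullet> y)\<^sup>2)"
  using assms
  by (simp add: sum_mat_mult inner_sum_right outer_mult power2_eq_square inner_commute mult.assoc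
        flip: scaleR_matrix_vector_assoc)

lemma sym_sum:
  fixes u :: "nat \<Rightarrow> real^'d"
  shows "transpose (\<Sum>k\<in>S. c k *\<^sub>R outer (u k) (u k)) = (\<Sum>k\<in>S. c k *\<^sub>R outer (u k) (u k))"
  by (simp add: vec_eq_iff transpose_def sum_component outer_def mult_ac)

lemma matrix_inv_props:
  fixes M :: "real^'d^'d"
  assumes "invertible M"
  shows "M ** matrix_inv M = mat 1" "matrix_inv M ** M = mat 1"
  using someI_ex[OF assms[unfolded invertible_def]] unfolding matrix_inv_def by auto

lemma inv_vec: 
  fixes M :: "real^'d^'d"
  assumes "invertible M"
  shows "M *v (matrix_inv M *v v) = v"
  by (simp add: matrix_vector_mul_assoc matrix_inv_props[OF assms])

lemma pd_invertible:
  fixes M :: "real^'d^'d"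
  assumes "\<forall>y. l * (y \<bullet> y) \<le> y \<bullet> (M *v y)" "l > 0"
  shows "invertible M"
proof -
  have "\<forall>y. M *v y = 0 \<longrightarrow> y = 0"
  proof (intro allI impI)
    fix y assume "M *v y = 0"
    then have "l * (y \<bullet> y) \<le> 0" using assms(1)[rule_format, of y] by simp
    then have "y \<bullet> y \<le> 0" using assms(2) by (simp add: mult_le_0_iff)
    then show "y = 0" by (metis inner_gt_zero_iff not_le)
  qed
  then show ?thesis unfolding invertible_left_inverse matrix_left_invertible_ker .
qed

lemma sym_swap:
  fixes M :: "real^'d^'d"
  assumes "transpose M = M"
  shows "u \<bullet> (M *v w) = (M *v u) \<bullet> w"
proof -
  have "u \<bullet> (M *v w) = (u v* M) \<bullet> w" by (simp add: dot_lmul_matrix)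
  also have "u v* M = transpose M *v u" by simp
  finally show ?thesis using assms by simp
qed

lemma inv_compare:
  fixes M N :: "real^'d^'d"
  assumes sym: "transpose M = M" and iM: "invertible M" and iN: "invertible N"
    and psd: "\<forall>y. 0 \<le> y \<bullet> (M *v y)"
    and le: "\<forall>y. y \<bullet> (M *v y) \<le> c * (y \<bullet> (N *v y))" and c: "c > 0"
  shows "v \<bullet> (matrix_inv N *v v) \<le> c * (v \<bullet> (matrix_inv M *v v))"
proof -
  define w where "w = matrix_inv N *v v"
  define u where "u = matrix_inv M *v v"
  have Nw: "N *v w = v" unfolding w_def by (rule inv_vec[OF iN])
  have Mu: "M *v u = v" unfolding u_def by (rule inv_vec[OF iM])
  define s where "s = w \<bullet> v"
  define r where "r = u \<bullet> v"
  define t where "t = 1 / c"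
  have uMw: "u \<bullet> (M *v w) = s" using sym_swap[OF sym, of u w] Mu s_def by (simp add: inner_commute)
  have wMu: "w \<bullet> (M *v u) = s" using Mu s_def by simp
  have uMu: "u \<bullet> (M *v u) = r" using Mu r_def by simp
  have wMw: "w \<bullet> (M *v w) \<le> c * s" using le[rule_format, of w] Nw s_def by simp
  have "0 \<le> (t *\<^sub>R w - u) \<bullet> (M *v (t *\<^sub>R w - u))" using psd by blast
  also have "\<dots> = t * t * (w \<bullet> (M *v w)) - t * (u \<bullet> (M *v w)) - t * (w \<bullet> (M *v u)) + u \<bullet> (M *v u)"
    by (simp add: matrix_vector_mult_diff_distrib matrix_vector_mult_scaleR inner_diff_left inner_diff_right algebra_simps)
  also have "\<dots> = t * t * (w \<bullet> (M *v w)) - 2 * t * s + r" using uMw wMu uMu by simp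
  also have "\<dots> \<le> t * t * (c * s) - 2 * t * s + r"
    using wMw by (simp add: mult_left_mono)
  also have "\<dots> = r - s / c" using c unfolding t_def by (simp add: field_simps power2_eq_square)
  finally have "s / c \<le> r" by simp
  then have "s \<le> c * r" using c by (simp add: field_simps)
  then show ?thesis unfolding s_def r_def w_def u_def by (simp add: inner_commute)
qed

definition FF :: "real^'d^'d \<Rightarrow> real^'d \<Rightarrow> real \<Rightarrow> real" where
  "FF A v l = v \<bullet> (matrix_inv (A + l *\<^sub>R mat 1) *v v)"

lemma shift_qf:
  fixes A :: "real^'d^'d" and l :: real
  shows "y \<bullet> ((A + l *\<^sub>R mat 1) *v y) = y \<bullet> (A *v y) + l * (y \<bullet> y)"
proof -
  have "(l *\<^sub>R mat 1) *v y = l *\<^sub>R y"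
  proof -
    have "(l *\<^sub>R mat 1) *v y = l *\<^sub>R (mat 1 *v y)" by (rule scaleR_matrix_vector_assoc[symmetric])
    then show ?thesis by (simp only: matrix_vector_mul_lid)
  qed
  then show ?thesis by (simp add: matrix_vector_mult_add_rdistrib inner_add_right)
qed

lemma shift_sym: "transpose (A::real^'d^'d) = A \<Longrightarrow> transpose (A + l *\<^sub>R mat 1) = A + l *\<^sub>R mat 1"
  by (simp add: vec_eq_iff transpose_def mat_def)

lemma shift_inv:
  fixes A :: "real^'d^'d"
  assumes "\<forall>y. 0 \<le> y \<bullet> (A *v y)" "l > 0"
  shows "invertible (A + l *\<^sub>R mat 1)"
  by (rule pd_invertible[of l]) (use assms in \<open>auto simp: shift_qf\<close>)

lemma FF_nonneg:
  fixes A :: "real^'d^'d"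
  assumes "\<forall>y. 0 \<le> y \<bullet> (A *v y)" "l > 0"
  shows "0 \<le> FF A v l"
proof -
  let ?M = "A + l *\<^sub>R mat 1"
  define u where "u = matrix_inv ?M *v v"
  have "?M *v u = v" unfolding u_def by (rule inv_vec[OF shift_inv[OF assms]])
  then have "FF A v l = u \<bullet> (?M *v u)" unfolding FF_def u_def by (simp add: inner_commute)
  also have "\<dots> \<ge> 0" using assms by (simp add: shift_qf)
  finally show ?thesis .
qed

lemma FF_mono:
  fixes A :: "real^'d^'d"
  assumes sym: "transpose A = A" and psd: "\<forall>y. 0 \<le> y \<bullet> (A *v y)" and "0 < l1" "l1 \<le> l2"
  shows "FF A v l2 \<le> FF A v l1"
proof -
  have "FF A v l2 \<le> 1 * FF A v l1"
    unfolding FF_def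
  proof (rule inv_compare)
    show "transpose (A + l1 *\<^sub>R mat 1) = A + l1 *\<^sub>R mat 1" by (rule shift_sym[OF sym])
    show "invertible (A + l1 *\<^sub>R mat 1)" "invertible (A + l2 *\<^sub>R mat 1)"
      using shift_inv[OF psd] assms by auto
    show "\<forall>y. 0 \<le> y \<bullet> ((A + l1 *\<^sub>R mat 1) *v y)" using psd assms by (simp add: shift_qf)
    show "\<forall>y. y \<bullet> ((A + l1 *\<^sub>R mat 1) *v y) \<le> 1 * (y \<bullet> ((A + l2 *\<^sub>R mat 1) *v y))"
      using assms by (simp add: shift_qf mult_right_mono)
  qed simp
  then show ?thesis by simp
qed

lemma gen_SUP:
  fixes A :: "real^'d^'d"
  assumes sym: "transpose A = A" and psd: "\<forall>y. 0 \<le> y \<bullet> (A *v y)"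
  shows "gen_inv_norm A v = (SUP l\<in>{0<..}. ereal (sqrt (FF A v l)))"
proof -
  let ?g = "\<lambda>l. ereal (sqrt (FF A v l))"
  let ?S = "SUP l\<in>{0<..}. ?g l"
  have h1: "\<forall>\<^sub>F l in at_right 0. ?g l \<le> ?S"
    unfolding eventually_at_right_field by (intro exI[of _ 1]) (auto intro: SUP_upper)
  have h2: "\<forall>\<^sub>F l in at_right 0. x < ?g l" if "x < ?S" for x
  proof -
    obtain l0 where l0: "l0 > 0" "x < ?g l0" using \<open>x < ?S\<close> by (auto simp: less_SUP_iff)
    have "\<forall>l. 0 < l \<and> l < l0 \<longrightarrow> x < ?g l"
    proof (intro allI impI)
      fix l :: real assume "0 < l \<and> l < l0"
      then have "FF A v l0 \<le> FF A v l" using FF_mono[OF sym psd] by auto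
      then have "?g l0 \<le> ?g l" by simp
      then show "x < ?g l" using l0 less_le_trans by blast
    qed
    then show ?thesis unfolding eventually_at_right_field using l0 by auto
  qed
  have "(?g \<longlongrightarrow> ?S) (at_right 0)" by (rule increasing_tendsto[OF h1 h2])
  then show ?thesis unfolding gen_inv_norm_def FF_def
    by (intro tendsto_Lim) (auto simp: trivial_limit_at_right_real)
qed

lemma gen_nonneg:
  fixes A :: "real^'d^'d"
  assumes sym: "transpose A = A" and psd: "\<forall>y. 0 \<le> y \<bullet> (A *v y)"
  shows "0 \<le> gen_inv_norm A v"
proof -
  have "ereal (sqrt (FF A v 1)) \<le> gen_inv_norm A v"
    unfolding gen_SUP[OF sym psd] by (rule SUP_upper) auto
  moreover have "0 \<le> ereal (sqrt (FF A v 1))" using FF_nonneg[OF psd, of 1] by simp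
  ultimately show ?thesis using order_trans by blast
qed

lemma gen_compare:
  fixes A B :: "real^'d^'d"
  assumes symA: "transpose A = A" and psdA: "\<forall>y. 0 \<le> y \<bullet> (A *v y)"
    and symB: "transpose B = B" and psdB: "\<forall>y. 0 \<le> y \<bullet> (B *v y)"
    and le: "\<forall>y. y \<bullet> (A *v y) \<le> 4 * (y \<bullet> (B *v y))"
  shows "gen_inv_norm B v \<le> 2 * gen_inv_norm A v"
  unfolding gen_SUP[OF symB psdB]
proof (rule SUP_least)
  fix l :: real assume "l \<in> {0<..}"
  then have l: "l > 0" by simp
  have "FF B v l \<le> 4 * FF A v (4 * l)"
    unfolding FF_def
  proof (rule inv_compare)
    show "transpose (A + (4 * l) *\<^sub>R mat 1) = A + (4 * l) *\<^sub>R mat 1" by (rule shift_sym[OF symA])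
    show "invertible (A + (4 * l) *\<^sub>R mat 1)" using shift_inv[OF psdA] l by simp
    show "invertible (B + l *\<^sub>R mat 1)" using shift_inv[OF psdB] l by simp
    show "\<forall>y. 0 \<le> y \<bullet> ((A + (4 * l) *\<^sub>R mat 1) *v y)" using psdA l by (simp add: shift_qf)
    show "\<forall>y. y \<bullet> ((A + (4 * l) *\<^sub>R mat 1) *v y) \<le> 4 * (y \<bullet> ((B + l *\<^sub>R mat 1) *v y))"
    proof
      fix y :: "real^'d"
      show "y \<bullet> ((A + (4 * l) *\<^sub>R mat 1) *v y) \<le> 4 * (y \<bullet> ((B + l *\<^sub>R mat 1) *v y))"
        unfolding shift_qf using le[rule_format, of y] by (simp add: algebra_simps)
    qed
  qed simp
  then have "sqrt (FF B v l) \<le> sqrt (4 * FF A v (4 * l))" by (simp only: real_sqrt_le_iff)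
  also have "\<dots> = 2 * sqrt (FF A v (4 * l))" by (simp add: real_sqrt_mult)
  finally have "ereal (sqrt (FF B v l)) \<le> 2 * ereal (sqrt (FF A v (4 * l)))" by simp
  also have "\<dots> \<le> 2 * (SUP l\<in>{0<..}. ereal (sqrt (FF A v l)))"
    by (rule ereal_mult_left_mono) (use l in \<open>auto intro: SUP_upper\<close>)
  finally show "ereal (sqrt (FF B v l)) \<le> 2 * gen_inv_norm A v"
    unfolding gen_SUP[OF symA psdA] .
qed

lemma ereal_sq_div:
  fixes a b :: ereal
  assumes "0 \<le> a" "0 \<le> b" "a \<le> 2 * b" "d > 0"
  shows "a\<^sup>2 / ereal d \<le> 4 * (b\<^sup>2 / ereal d)"
proof (cases b)
  case PInf
  then show ?thesis using assms by (simp add: ereal_divide_eq)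
next
  case (real rb)
  then obtain ra where ra: "a = ereal ra" using assms by (cases a) auto
  have "ra \<le> 2 * rb" "0 \<le> ra" using assms ra real by auto
  then have "ra\<^sup>2 \<le> (2 * rb)\<^sup>2" by (intro power_mono)
  then have "ra\<^sup>2 \<le> 4 * rb\<^sup>2" by (simp add: power_mult_distrib)
  then have "ra\<^sup>2 / d \<le> 4 * (rb\<^sup>2 / d)" using assms by (simp add: divide_right_mono power_mult_distrib)
  then show ?thesis using ra real assms by simp
next
  case MInf
  then show ?thesis using assms by simp
qed

lemma Sigma_qf:
  "y \<bullet> (Sigma_minus K x k r *v y) = (\<Sum>k'\<in>{1..K}. r k' * ((x k' - x k) \<bullet> y)\<^sup>2)"
  unfolding Sigma_minus_def by (rule qf_sum) simp

lemma Sigma_sym: "transpose (Sigma_minus K x k r) = Sigma_minus K x k r"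
  unfolding Sigma_minus_def by (rule sym_sum)

lemma Sigma_psd: "r \<in> prob_simplex K \<Longrightarrow> \<forall>y. 0 \<le> y \<bullet> (Sigma_minus K x k r *v y)"
  unfolding Sigma_qf prob_simplex_def by (auto intro!: sum_nonneg)

lemma ereal_quarter: "ereal (1/4) * (4 * (X::ereal)) = X"
proof -
  have "(4::ereal) = ereal 4" by simp
  then have "ereal (1/4) * 4 = 1" by (simp add: one_ereal_def)
  then show ?thesis by (simp add: mult.assoc[symmetric])
qed

theorem mainTheorem2:
  fixes K :: nat and x :: "nat \<Rightarrow> real^'d" and Z :: "(real^'d) set"
    and \<theta> :: "real^'d" and zs :: "real^'d" and i j :: nat
  assumes "finite Z"
    and "zs \<in> Z"
    and "\<forall>z\<in>Z. z \<noteq> zs \<longrightarrow> z \<bullet> \<theta> < zs \<bullet> \<theta>"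
    and "i \<in> {1..K}" and "j \<in> {1..K}"
  shows "tau_lin K x Z \<theta> zs i \<le> 4 * tau_lin K x Z \<theta> zs j"
proof -
  define SS where "SS k r = (SUP z\<in>Z - {zs}.
        (gen_inv_norm (Sigma_minus K x k r) (zs - z))\<^sup>2 / ereal (((zs - z) \<bullet> \<theta>)\<^sup>2))" for k r
  have tau: "tau_lin K x Z \<theta> zs k = (INF r\<in>prob_simplex K. SS k r)" for k
    unfolding tau_lin_def SS_def ..
  have main: "tau_lin K x Z \<theta> zs i \<le> 4 * SS j p" if p: "p \<in> prob_simplex K" for p
  proof -
    define q where "q k = (p k + (if k = j then 1 else 0)) / 2" for k
    have q: "q \<in> prob_simplex K"
    proof -
      have "(\<Sum>k=1..K. q k) = ((\<Sum>k=1..K. p k) + (\<Sum>k=1..K. (if k = j then 1 else 0))) / 2"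
        unfolding q_def by (simp only: sum_divide_distrib[symmetric] sum.distrib)
      also have "\<dots> = 1" using p assms(5) unfolding prob_simplex_def by simp
      finally show ?thesis using p unfolding prob_simplex_def q_def by auto
    qed
    have cmp: "\<forall>y. y \<bullet> (Sigma_minus K x j p *v y) \<le> 4 * (y \<bullet> (Sigma_minus K x i q *v y))"
    proof
      fix y :: "real^'d"
      define a where "a k = (x k - x i) \<bullet> y" for k
      define d where "d = (x j - x i) \<bullet> y"
      have e1: "(x k - x j) \<bullet> y = a k - d" for k
        unfolding a_def d_def by (simp add: inner_diff_left)
      have "y \<bullet> (Sigma_minus K x i q *v y) = (\<Sum>k\<in>{1..K}. q k * (a k)\<^sup>2)"
        unfolding Sigma_qf a_def ..
      also have "\<dots> = (\<Sum>k\<in>{1..K}. p k * (a k)\<^sup>2) / 2 + (\<Sum>k\<in>{1..K}. (if k = j then (a k)\<^sup>2 else 0)) / 2"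
      proof -
        have "(\<Sum>k\<in>{1..K}. q k * (a k)\<^sup>2) = (\<Sum>k\<in>{1..K}. p k * (a k)\<^sup>2 / 2 + (if k = j then (a k)\<^sup>2 else 0) / 2)"
          by (rule sum.cong) (simp_all add: q_def field_simps)
        also have "\<dots> = (\<Sum>k\<in>{1..K}. p k * (a k)\<^sup>2) / 2 + (\<Sum>k\<in>{1..K}. (if k = j then (a k)\<^sup>2 else 0)) / 2"
          by (simp only: sum.distrib sum_divide_distrib)
        finally show ?thesis .
      qed
      also have "(\<Sum>k\<in>{1..K}. (if k = j then (a k)\<^sup>2 else 0)) = d\<^sup>2"
        using assms(5) by (simp add: a_def d_def)
      finally have R: "y \<bullet> (Sigma_minus K x i q *v y) = (\<Sum>k\<in>{1..K}. p k * (a k)\<^sup>2) / 2 + d\<^sup>2 / 2" .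
      have "y \<bullet> (Sigma_minus K x j p *v y) = (\<Sum>k\<in>{1..K}. p k * (a k - d)\<^sup>2)"
        unfolding Sigma_qf e1 ..
      also have "\<dots> \<le> (\<Sum>k\<in>{1..K}. p k * (2 * (a k)\<^sup>2 + 2 * d\<^sup>2))"
      proof (rule sum_mono)
        fix k assume "k \<in> {1..K}"
        then have "0 \<le> p k" using p unfolding prob_simplex_def by auto
        moreover have "(a k - d)\<^sup>2 \<le> 2 * (a k)\<^sup>2 + 2 * d\<^sup>2"
        proof -
          have "0 \<le> (a k + d)\<^sup>2" by simp
          then show ?thesis unfolding power2_diff power2_sum by linarith
        qed
        ultimately show "p k * (a k - d)\<^sup>2 \<le> p k * (2 * (a k)\<^sup>2 + 2 * d\<^sup>2)"
          by (rule mult_left_mono[rotated])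
      qed
      also have "\<dots> = 2 * (\<Sum>k\<in>{1..K}. p k * (a k)\<^sup>2) + 2 * d\<^sup>2 * (\<Sum>k\<in>{1..K}. p k)"
      proof -
        have "(\<Sum>k\<in>{1..K}. p k * (2 * (a k)\<^sup>2 + 2 * d\<^sup>2)) = (\<Sum>k\<in>{1..K}. 2 * (p k * (a k)\<^sup>2) + 2 * d\<^sup>2 * p k)"
          by (rule sum.cong) (simp_all add: algebra_simps)
        also have "\<dots> = 2 * (\<Sum>k\<in>{1..K}. p k * (a k)\<^sup>2) + 2 * d\<^sup>2 * (\<Sum>k\<in>{1..K}. p k)"
          by (simp only: sum.distrib sum_distrib_left)
        finally show ?thesis .
      qed
      also have "(\<Sum>k\<in>{1..K}. p k) = 1" using p unfolding prob_simplex_def by simp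
      finally show "y \<bullet> (Sigma_minus K x j p *v y) \<le> 4 * (y \<bullet> (Sigma_minus K x i q *v y))"
        unfolding R by simp
    qed
    have "tau_lin K x Z \<theta> zs i \<le> SS i q" unfolding tau by (rule INF_lower[OF q])
    also have "\<dots> \<le> 4 * SS j p"
      unfolding SS_def
    proof (rule SUP_least)
      fix z assume z: "z \<in> Z - {zs}"
      let ?d = "((zs - z) \<bullet> \<theta>)\<^sup>2"
      have "z \<bullet> \<theta> < zs \<bullet> \<theta>" using z assms(3) by auto
      then have dpos: "?d > 0" by (simp add: inner_diff_left)
      have "(gen_inv_norm (Sigma_minus K x i q) (zs - z))\<^sup>2 / ereal ?d
          \<le> 4 * ((gen_inv_norm (Sigma_minus K x j p) (zs - z))\<^sup>2 / ereal ?d)"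
        by (rule ereal_sq_div[OF gen_nonneg[OF Sigma_sym Sigma_psd[OF q]]
              gen_nonneg[OF Sigma_sym Sigma_psd[OF p]]
              gen_compare[OF Sigma_sym Sigma_psd[OF p] Sigma_sym Sigma_psd[OF q] cmp] dpos])
      also have "\<dots> \<le> 4 * (SUP z\<in>Z - {zs}. (gen_inv_norm (Sigma_minus K x j p) (zs - z))\<^sup>2 / ereal (((zs - z) \<bullet> \<theta>)\<^sup>2))"
        by (rule ereal_mult_left_mono) (use z in \<open>auto intro: SUP_upper\<close>)
      finally show "(gen_inv_norm (Sigma_minus K x i q) (zs - z))\<^sup>2 / ereal ?d
          \<le> 4 * (SUP z\<in>Z - {zs}. (gen_inv_norm (Sigma_minus K x j p) (zs - z))\<^sup>2 / ereal (((zs - z) \<bullet> \<theta>)\<^sup>2))" .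
    qed
    finally show ?thesis .
  qed
  have "ereal (1/4) * tau_lin K x Z \<theta> zs i \<le> (INF r\<in>prob_simplex K. SS j r)"
  proof (rule INF_greatest)
    fix p assume "p \<in> prob_simplex K"
    then have "ereal (1/4) * tau_lin K x Z \<theta> zs i \<le> ereal (1/4) * (4 * SS j p)"
      by (intro ereal_mult_left_mono main) auto
    then show "ereal (1/4) * tau_lin K x Z \<theta> zs i \<le> SS j p" by (simp only: ereal_quarter)
  qed
  then have "4 * (ereal (1/4) * tau_lin K x Z \<theta> zs i) \<le> 4 * tau_lin K x Z \<theta> zs j"
    unfolding tau[of j] by (intro ereal_mult_left_mono) auto
  moreover have "4 * (ereal (1/4) * tau_lin K x Z \<theta> zs i) = tau_lin K x Z \<theta> zs i"
  proof -
    have "(4::ereal) = ereal 4" by simp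
    then have "4 * ereal (1/4) = 1" by (simp add: one_ereal_def)
    then show ?thesis by (simp add: mult.assoc[symmetric])
  qed
  ultimately show ?thesis by simp
qed

end
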